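(* Let $a_1,\dots,a_n$ be positive integers and $\mathcal{G}=\mathcal{G}[a_1,\dots,a_n]$, and let $e_d$ be the last edge of this presentation of $\mathcal{G}$. (a) The reflection of $\mathcal{G}$ in the line $y=x$ is (a translate of) $\mathcal{G}[1,a_1-1,a_2,\dots,a_n]$; in particular $\mathcal{G}[a_1,\dots,a_n]\cong\mathcal{G}[1,a_1-1,a_2,\dots,a_n]$. (b) The reflection of $\mathcal{G}$ in the line $y=-x$ is (a translate of) $\mathcal{G}[1,a_n-1,a_{n-1},\dots,a_2,a_1]$ if $e_d$ is the north edge of the last tile, and of $\mathcal{G}[a_n,\dots,a_2,a_1]$ if $e_d$ is the east edge of the last tile. (c) The rotation of $\mathcal{G}$ by $180^\circ$ is (a translate of) $\mathcal{G}[a_n,\dots,a_2,a_1]$ if $e_d$ is the north edge of the last tile, and of $\mathcal{G}[1,a_n-1,a_{n-1},\dots,a_2,a_1]$ if $e_d$ is the east edge of the last tile.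
   Context: A tile is a unit square in the plane with sides parallel to the axes, viewed as a graph with 4 vertices and 4 edges. A snake graph with $d\ge1$ tiles is a planar graph which is the union of tiles $G_1,\dots,G_d$ with each $G_{i+1}$ the translate of $G_i$ by $(0,1)$ or $(1,0)$, so that $G_i,G_{i+1}$ share exactly one edge $e_i$; snake graphs are considered up to translation. A sign function on a snake graph is a map $f$ from edges to $\{+,-\}$ such that in each tile the north and west edges have the same sign, the south and east edges have the same sign, and north and south edges have opposite signs. For positive integers $a_1,\dots,a_n$ with $d=a_1+\dots+a_n-1\ge1$, $\mathcal{G}[a_1,\dots,a_n]$ is the unique snake graph with tiles $G_1,\dots,G_d$ admitting a sign function $f$ and an edge $e_d\in\{\text{north edge of }G_d,\text{east edge of }G_d\}$ such that, with $e_0$ the south edge of $G_1$ and $e_i$ ($1\le i\le d-1$) the edge shared by $G_i,G_{i+1}$, the sequence $(f(e_0),\dots,f(e_d))$ consists of $a_1$ copies of a sign $s$, then $a_2$ copies of $-s$, then $a_3$ copies of $s$, etc.; the edge $e_d$ is then uniquely determined by the sequence $(a_1,\dots,a_n)$ and is called the last edge of this presentation. Sequences with an entry equal to $0$ are interpreted via $[\dots,a,0,b,\dots]=[\dots,a+b,\dots]$ (e.g. $\mathcal{G}[1,0,b,\dots]=\mathcal{G}[1+b,\dots]$). *)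

theory Defs
  imports Main
begin

(* Lattice points and unit edges. An edge of the plane grid is the 2-element set
   of its endpoints. A tile is identified by its lower-left corner. *)
type_synonym pt = "int \<times> int"
type_synonym edge = "pt set"

fun south_edge :: "pt \<Rightarrow> edge" where
  "south_edge (x, y) = {(x, y), (x + 1, y)}"
fun north_edge :: "pt \<Rightarrow> edge" where
  "north_edge (x, y) = {(x, y + 1), (x + 1, y + 1)}"
fun west_edge :: "pt \<Rightarrow> edge" where
  "west_edge (x, y) = {(x, y), (x, y + 1)}"
fun east_edge :: "pt \<Rightarrow> edge" where
  "east_edge (x, y) = {(x + 1, y), (x + 1, y + 1)}"

definition tile_edges :: "pt \<Rightarrow> edge set" where
  "tile_edges p = {south_edge p, north_edge p, west_edge p, east_edge p}"

fun up :: "pt \<Rightarrow> pt" where "up (x, y) = (x, y + 1)"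
fun right :: "pt \<Rightarrow> pt" where "right (x, y) = (x + 1, y)"

definition snake_tiles :: "pt list \<Rightarrow> bool" where
  "snake_tiles ps \<longleftrightarrow> ps \<noteq> [] \<and>
     (\<forall>i. Suc i < length ps \<longrightarrow> ps ! Suc i = up (ps ! i) \<or> ps ! Suc i = right (ps ! i))"

(* The snake graph as a plane graph, given by its edge set (vertices = endpoints). *)
definition snake_edges :: "pt list \<Rightarrow> edge set" where
  "snake_edges ps = \<Union> (tile_edges ` set ps)"

definition sign_function :: "pt list \<Rightarrow> (edge \<Rightarrow> bool) \<Rightarrow> bool" where
  "sign_function ps f \<longleftrightarrow> (\<forall>p \<in> set ps.
     f (north_edge p) = f (west_edge p) \<and> f (south_edge p) = f (east_edge p) \<and>
     f (north_edge p) \<noteq> f (south_edge p))"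

(* e_i (1 <= i <= d-1): the edge shared by G_i = ps!(i-1) and G_{i+1} = ps!i *)
definition shared_edge :: "pt list \<Rightarrow> nat \<Rightarrow> edge" where
  "shared_edge ps i = (if ps ! i = up (ps ! (i - 1)) then north_edge (ps ! (i - 1))
                       else east_edge (ps ! (i - 1)))"

definition edge_seq :: "pt list \<Rightarrow> edge \<Rightarrow> edge list" where
  "edge_seq ps ed = south_edge (hd ps) # map (shared_edge ps) [1..<length ps] @ [ed]"

(* a_1 copies of s, then a_2 copies of -s, ...; zero entries automatically realize
   the convention [..,a,0,b,..] = [..,a+b,..] *)
fun sign_pattern :: "bool \<Rightarrow> nat list \<Rightarrow> bool list" where
  "sign_pattern s [] = []"
| "sign_pattern s (a # as) = replicate a s @ sign_pattern (\<not> s) as"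

definition presents :: "nat list \<Rightarrow> pt list \<Rightarrow> edge \<Rightarrow> bool" where
  "presents a ps ed \<longleftrightarrow> snake_tiles ps \<and> length ps = sum_list a - 1 \<and>
     ed \<in> {north_edge (last ps), east_edge (last ps)} \<and>
     (\<exists>f s. sign_function ps f \<and> map f (edge_seq ps ed) = sign_pattern s a)"

fun refl_diag :: "pt \<Rightarrow> pt" where "refl_diag (x, y) = (y, x)"
fun refl_antidiag :: "pt \<Rightarrow> pt" where "refl_antidiag (x, y) = (- y, - x)"
fun rot180 :: "pt \<Rightarrow> pt" where "rot180 (x, y) = (- x, - y)"

definition map_edges :: "(pt \<Rightarrow> pt) \<Rightarrow> edge set \<Rightarrow> edge set" where
  "map_edges g E = (\<lambda>e. g ` e) ` E"

end

theory Submission imports Defs begin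

fun tr :: "pt \<Rightarrow> pt" where "tr (x, y) = (- x - 1, - y - 1)"
fun ta :: "pt \<Rightarrow> pt" where "ta (x, y) = (- y - 1, - x - 1)"

lemma up_ne_right: "up p \<noteq> right p" by (cases p) auto
lemma north_ne_east: "north_edge p \<noteq> east_edge p"
  by (cases p) (auto simp: doubleton_eq_iff)

lemma diag_up_iff: "refl_diag p = up (refl_diag q) \<longleftrightarrow> p = right q" by (cases p; cases q) auto
lemma diag_right_iff: "refl_diag p = right (refl_diag q) \<longleftrightarrow> p = up q" by (cases p; cases q) auto
lemma tr_up_iff: "tr p = up (tr q) \<longleftrightarrow> q = up p" by (cases p; cases q) auto
lemma tr_right_iff: "tr p = right (tr q) \<longleftrightarrow> q = right p" by (cases p; cases q) auto
lemma ta_up_iff: "ta p = up (ta q) \<longleftrightarrow> q = right p" by (cases p; cases q) auto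
lemma ta_right_iff: "ta p = right (ta q) \<longleftrightarrow> q = up p" by (cases p; cases q) auto

lemma te_diag: "(\<lambda>e. refl_diag ` e) ` tile_edges p = tile_edges (refl_diag p)"
  by (cases p) (auto simp: tile_edges_def)
lemma te_rot: "(\<lambda>e. rot180 ` e) ` tile_edges p = tile_edges (tr p)"
  by (cases p) (auto simp: tile_edges_def)
lemma te_anti: "(\<lambda>e. refl_antidiag ` e) ` tile_edges p = tile_edges (ta p)"
  by (cases p) (auto simp: tile_edges_def)

definition P :: "edge \<Rightarrow> bool" where
  "P e \<longleftrightarrow> (\<exists>x y. (e = south_edge (x,y) \<and> even (x+y)) \<or> (e = west_edge (x,y) \<and> odd (x+y)))"

lemma P_south: "P (south_edge (x,y)) = even (x+y)"
  unfolding P_def by (auto simp: doubleton_eq_iff)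
lemma P_west: "P (west_edge (x,y)) = odd (x+y)"
  unfolding P_def by (auto simp: doubleton_eq_iff)

lemma P_north: "P (north_edge (x,y)) = odd (x+y)"
proof -
  have "north_edge (x,y) = south_edge (x,y+1)" by simp
  then show ?thesis by (simp only: P_south) presburger
qed
lemma P_east: "P (east_edge (x,y)) = even (x+y)"
proof -
  have "east_edge (x,y) = west_edge (x+1,y)" by simp
  then show ?thesis by (simp only: P_west) (simp add: add.commute add.left_commute)
qed

lemma sf_global: "sign_function ps (\<lambda>e. c \<noteq> P e)"
  unfolding sign_function_def
proof
  fix p assume "p \<in> set ps"
  obtain x y where p: "p = (x,y)" by (cases p)
  show "(c \<noteq> P (north_edge p)) = (c \<noteq> P (west_edge p)) \<and>
        (c \<noteq> P (south_edge p)) = (c \<noteq> P (east_edge p)) \<and>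
        (c \<noteq> P (north_edge p)) \<noteq> (c \<noteq> P (south_edge p))"
    unfolding p P_north P_west P_south P_east by auto
qed

lemma snake_step: "snake_tiles ps \<Longrightarrow> Suc i < length ps \<Longrightarrow> ps ! Suc i = up (ps ! i) \<or> ps ! Suc i = right (ps ! i)"
  unfolding snake_tiles_def by blast

lemma south_up: "south_edge (up p) = north_edge p" by (cases p) auto
lemma west_right: "west_edge (right p) = east_edge p" by (cases p) auto

lemma sf_tile:
  assumes "sign_function ps f" "i < length ps"
  shows "f (north_edge (ps!i)) = (\<not> f (south_edge (ps!i)))"
        "f (east_edge (ps!i)) = f (south_edge (ps!i))"
        "f (west_edge (ps!i)) = (\<not> f (south_edge (ps!i)))"
  using assms nth_mem[OF assms(2)] unfolding sign_function_def by metis+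

lemma sf_south:
  assumes "snake_tiles ps" "sign_function ps f"
  shows "i < length ps \<Longrightarrow> f (south_edge (ps!i)) = (f (south_edge (hd ps)) \<noteq> odd i)"
proof (induction i)
  case 0
  then show ?case using assms(1) by (simp add: hd_conv_nth snake_tiles_def)
next
  case (Suc i)
  then have IH: "f (south_edge (ps!i)) = (f (south_edge (hd ps)) \<noteq> odd i)" by simp
  have "f (south_edge (ps ! Suc i)) = (\<not> f (south_edge (ps!i)))"
  proof (cases "ps ! Suc i = up (ps ! i)")
    case True
    then show ?thesis using sf_tile[OF assms(2), of i] Suc.prems by (simp add: south_up)
  next
    case False
    then have r: "ps ! Suc i = right (ps ! i)" using snake_step[OF assms(1) Suc.prems] by blast
    have "f (west_edge (ps ! Suc i)) = (\<not> f (south_edge (ps ! Suc i)))"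
      using sf_tile(3)[OF assms(2) Suc.prems] .
    then show ?thesis using sf_tile(2)[OF assms(2), of i] Suc.prems r by (simp add: west_right)
  qed
  then show ?case using IH by simp
qed

definition hs :: "pt list \<Rightarrow> edge \<Rightarrow> nat \<Rightarrow> bool" where
  "hs ps ed k = (if k = 0 then True else if k < length ps then ps!k = up (ps!(k-1))
                 else ed = north_edge (last ps))"

definition word :: "bool \<Rightarrow> pt list \<Rightarrow> edge \<Rightarrow> bool list" where
  "word \<sigma> ps ed = map (\<lambda>k. (\<sigma> \<noteq> odd k) = hs ps ed k) [0..<Suc (length ps)]"

lemma edge_seq_nth:
  assumes "ps \<noteq> []" "k < Suc (length ps)"
  shows "edge_seq ps ed ! k = (if k = 0 then south_edge (hd ps) else if k < length ps then shared_edge ps k else ed)"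
proof -
  have L: "length (map (shared_edge ps) [1..<length ps]) = length ps - 1" by simp
  show ?thesis
  proof (cases k)
    case 0 then show ?thesis by (simp add: edge_seq_def)
  next
    case (Suc m)
    then show ?thesis using assms unfolding edge_seq_def
      by (auto simp: nth_append)
  qed
qed

lemma length_edge_seq: "ps \<noteq> [] \<Longrightarrow> length (edge_seq ps ed) = Suc (length ps)"
  by (simp add: edge_seq_def)

lemma word_lemma:
  assumes sn: "snake_tiles ps" and sf: "sign_function ps f"
    and ed: "ed \<in> {north_edge (last ps), east_edge (last ps)}"
  shows "map f (edge_seq ps ed) = word (f (south_edge (hd ps))) ps ed"
proof -
  have ne: "ps \<noteq> []" using sn by (simp add: snake_tiles_def)
  define \<sigma> where "\<sigma> = f (south_edge (hd ps))"
  show ?thesis unfolding \<sigma>_def[symmetric]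
  proof (rule nth_equalityI)
    show "length (map f (edge_seq ps ed)) = length (word \<sigma> ps ed)"
      using ne by (simp add: length_edge_seq word_def)
  next
    fix k assume "k < length (map f (edge_seq ps ed))"
    then have k: "k < Suc (length ps)" using ne by (simp add: length_edge_seq)
    have wk: "word \<sigma> ps ed ! k = ((\<sigma> \<noteq> odd k) = hs ps ed k)"
      unfolding word_def using k by (simp del: upt_Suc)
    have ek: "map f (edge_seq ps ed) ! k = f (edge_seq ps ed ! k)"
      using k ne by (simp add: length_edge_seq)
    show "map f (edge_seq ps ed) ! k = word \<sigma> ps ed ! k"
    proof (cases "k = 0")
      case True then show ?thesis using wk ek edge_seq_nth[OF ne k] by (simp add: hs_def \<sigma>_def)
    next
      case False
      then obtain m where m: "k = Suc m" by (cases k) auto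
      have mlt: "m < length ps" using k m by simp
      have S: "f (south_edge (ps!m)) = (\<sigma> \<noteq> odd m)"
        using sf_south[OF sn sf mlt] \<sigma>_def by simp
      show ?thesis
      proof (cases "k < length ps")
        case True
        then show ?thesis using wk ek edge_seq_nth[OF ne k] m S sf_tile[OF sf mlt]
          by (auto simp: hs_def shared_edge_def)
      next
        case False
        then have "m = length ps - 1" using k m by simp
        then have lm: "last ps = ps ! m" using ne by (simp add: last_conv_nth)
        show ?thesis using False wk ek edge_seq_nth[OF ne k] m S sf_tile[OF sf mlt] ed lm north_ne_east[of "ps!m"]
          by (auto simp: hs_def)
      qed
    qed
  qed
qed

lemma presents_iff:
  "presents a ps ed \<longleftrightarrow> snake_tiles ps \<and> length ps = sum_list a - 1 \<and>
     ed \<in> {north_edge (last ps), east_edge (last ps)} \<and>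
     (\<exists>\<sigma> s. word \<sigma> ps ed = sign_pattern s a)"
proof
  assume "presents a ps ed"
  then show "snake_tiles ps \<and> length ps = sum_list a - 1 \<and>
     ed \<in> {north_edge (last ps), east_edge (last ps)} \<and>
     (\<exists>\<sigma> s. word \<sigma> ps ed = sign_pattern s a)"
    unfolding presents_def using word_lemma by metis
next
  assume A: "snake_tiles ps \<and> length ps = sum_list a - 1 \<and>
     ed \<in> {north_edge (last ps), east_edge (last ps)} \<and>
     (\<exists>\<sigma> s. word \<sigma> ps ed = sign_pattern s a)"
  then obtain \<sigma> s where w: "word \<sigma> ps ed = sign_pattern s a" by blast
  define c where "c = (\<sigma> \<noteq> P (south_edge (hd ps)))"
  have sn: "snake_tiles ps" and edin: "ed \<in> {north_edge (last ps), east_edge (last ps)}" using A by auto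
  have ceq: "(c \<noteq> P (south_edge (hd ps))) = \<sigma>" unfolding c_def by (cases \<sigma>; cases "P (south_edge (hd ps))") simp_all
  have m: "map (\<lambda>e. c \<noteq> P e) (edge_seq ps ed) = word (c \<noteq> P (south_edge (hd ps))) ps ed"
    by (rule word_lemma[OF sn sf_global edin])
  have "sign_function ps (\<lambda>e. c \<noteq> P e) \<and> map (\<lambda>e. c \<noteq> P e) (edge_seq ps ed) = sign_pattern s a"
    using sf_global m w unfolding ceq by simp
  then have "\<exists>f s. sign_function ps f \<and> map f (edge_seq ps ed) = sign_pattern s a" by blast
  then show "presents a ps ed" unfolding presents_def using A by blast
qed

lemma sp_append: "sign_pattern s (xs @ ys) = sign_pattern s xs @ sign_pattern (if even (length xs) then s else \<not> s) ys"
  by (induction xs arbitrary: s) auto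

lemma sp_rev: "rev (sign_pattern s a) = sign_pattern (if even (length a) then \<not> s else s) (rev a)"
  by (induction a arbitrary: s) (auto simp: sp_append)

lemma sp_flip: "x > 0 \<Longrightarrow> (\<not> hd (sign_pattern s (x#xs))) # tl (sign_pattern s (x#xs)) = sign_pattern (\<not> s) (1 # (x-1) # xs)"
  by (cases x) auto

lemma length_word: "length (word \<sigma> ps ed) = Suc (length ps)" by (simp add: word_def)
lemma word_nth: "k < Suc (length ps) \<Longrightarrow> word \<sigma> ps ed ! k = ((\<sigma> \<noteq> odd k) = hs ps ed k)"
  unfolding word_def by (simp del: upt_Suc)
lemma hs0: "hs ps ed 0" by (simp add: hs_def)

lemma odd_diff: "k \<le> d \<Longrightarrow> odd ((d::nat) - k) = (odd d \<noteq> odd k)"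
proof -
  assume "k \<le> d" then obtain j where "d = k + j" using le_Suc_ex by blast
  then show ?thesis by auto
qed

lemma list_flip: "length u = length v \<Longrightarrow> v \<noteq> [] \<Longrightarrow> u ! 0 = (\<not> v ! 0) \<Longrightarrow> (\<forall>k. 0 < k \<and> k < length v \<longrightarrow> u ! k = v ! k)
   \<Longrightarrow> u = (\<not> hd v) # tl v"
  by (rule nth_equalityI) (auto simp: hd_conv_nth nth_tl nth_Cons split: nat.splits)

lemma snake_diag: "snake_tiles ps \<Longrightarrow> snake_tiles (map refl_diag ps)"
  unfolding snake_tiles_def by (auto simp: diag_up_iff diag_right_iff)

lemma snake_tr: "snake_tiles ps \<Longrightarrow> snake_tiles (rev (map tr ps))"
  unfolding snake_tiles_def
proof (intro conjI allI impI)
  assume A: "ps \<noteq> [] \<and> (\<forall>i. Suc i < length ps \<longrightarrow> ps ! Suc i = up (ps ! i) \<or> ps ! Suc i = right (ps ! i))"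
  then show "rev (map tr ps) \<noteq> []" by simp
  fix i assume i: "Suc i < length (rev (map tr ps))"
  define j where "j = length ps - 2 - i"
  have j: "Suc j < length ps" "length ps - Suc i = Suc j" "length ps - Suc (Suc i) = j" using i by (auto simp: j_def)
  have e: "rev (map tr ps) ! Suc i = tr (ps ! j)" "rev (map tr ps) ! i = tr (ps ! Suc j)"
    using i j by (simp_all add: rev_nth)
  show "rev (map tr ps) ! Suc i = up (rev (map tr ps) ! i) \<or> rev (map tr ps) ! Suc i = right (rev (map tr ps) ! i)"
    unfolding e tr_up_iff tr_right_iff using A j(1) by blast
qed

lemma snake_ta: "snake_tiles ps \<Longrightarrow> snake_tiles (rev (map ta ps))"
  unfolding snake_tiles_def
proof (intro conjI allI impI)
  assume A: "ps \<noteq> [] \<and> (\<forall>i. Suc i < length ps \<longrightarrow> ps ! Suc i = up (ps ! i) \<or> ps ! Suc i = right (ps ! i))"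
  then show "rev (map ta ps) \<noteq> []" by simp
  fix i assume i: "Suc i < length (rev (map ta ps))"
  define j where "j = length ps - 2 - i"
  have j: "Suc j < length ps" "length ps - Suc i = Suc j" "length ps - Suc (Suc i) = j" using i by (auto simp: j_def)
  have e: "rev (map ta ps) ! Suc i = ta (ps ! j)" "rev (map ta ps) ! i = ta (ps ! Suc j)"
    using i j by (simp_all add: rev_nth)
  show "rev (map ta ps) ! Suc i = up (rev (map ta ps) ! i) \<or> rev (map ta ps) ! Suc i = right (rev (map ta ps) ! i)"
    unfolding e ta_up_iff ta_right_iff using A j(1) by blast
qed

lemma map_edges_snake: "map_edges g (snake_edges ps) = \<Union> ((\<lambda>p. (\<lambda>e. g ` e) ` tile_edges p) ` set ps)"
  unfolding map_edges_def snake_edges_def by auto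

lemma edges_diag: "snake_edges (map refl_diag ps) = map_edges refl_diag (snake_edges ps)"
  unfolding map_edges_snake te_diag by (simp add: snake_edges_def image_image)
lemma edges_tr: "snake_edges (rev (map tr ps)) = map_edges rot180 (snake_edges ps)"
  unfolding map_edges_snake te_rot by (simp add: snake_edges_def image_image)
lemma edges_ta: "snake_edges (rev (map ta ps)) = map_edges refl_antidiag (snake_edges ps)"
  unfolding map_edges_snake te_anti by (simp add: snake_edges_def image_image)

lemma hs_diag:
  assumes sn: "snake_tiles ps" and k: "0 < k" "k \<le> length ps"
  shows "hs (map refl_diag ps) (if ed = north_edge (last ps) then east_edge (last (map refl_diag ps))
           else north_edge (last (map refl_diag ps))) k = (\<not> hs ps ed k)"
proof (cases "k < length ps")
  case True
  then obtain i where i: "k = Suc i" using k by (cases k) auto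
  have "ps ! Suc i = up (ps ! i) \<or> ps ! Suc i = right (ps ! i)" using snake_step[OF sn] True i by simp
  then show ?thesis using True i up_ne_right[of "ps ! i"] by (auto simp: hs_def diag_up_iff)
next
  case False
  then show ?thesis using k north_ne_east[of "last (map refl_diag ps)"] by (auto simp: hs_def)
qed

lemma hs_tr:
  assumes sn: "snake_tiles ps" and k: "0 < k" "k \<le> length ps"
  shows "hs (rev (map tr ps)) (north_edge (last (rev (map tr ps)))) k = hs ps ed (length ps - k)"
proof (cases "k < length ps")
  case True
  then obtain i where i: "k = Suc i" using k by (cases k) auto
  have e: "rev (map tr ps) ! k = tr (ps ! (length ps - Suc k))" "rev (map tr ps) ! (k - 1) = tr (ps ! (length ps - k))"
    using True i by (simp_all add: rev_nth)
  have "length ps - k - 1 = length ps - Suc k" by simp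
  then show ?thesis using True k unfolding hs_def e tr_up_iff by auto
next
  case False
  then show ?thesis using k by (auto simp: hs_def)
qed

lemma hs_ta:
  assumes sn: "snake_tiles ps" and k: "0 < k" "k \<le> length ps"
  shows "hs (rev (map ta ps)) (east_edge (last (rev (map ta ps)))) k = (\<not> hs ps ed (length ps - k))"
proof (cases "k < length ps")
  case True
  then obtain i where i: "k = Suc i" using k by (cases k) auto
  have e: "rev (map ta ps) ! k = ta (ps ! (length ps - Suc k))" "rev (map ta ps) ! (k - 1) = ta (ps ! (length ps - k))"
    using True i by (simp_all add: rev_nth)
  have m: "length ps - k - 1 = length ps - Suc k" by simp
  obtain j where j: "length ps - k = Suc j" using True by (cases "length ps - k") auto
  have "Suc j < length ps" using j k by simp
  then have "ps ! Suc j = up (ps ! j) \<or> ps ! Suc j = right (ps ! j)" using snake_step[OF sn] by simp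
  moreover have "length ps - Suc k = j" using j by simp
  ultimately show ?thesis using True k j up_ne_right[of "ps ! j"] unfolding hs_def e ta_up_iff by auto
next
  case False
  then show ?thesis using k north_ne_east[of "last (rev (map ta ps))"] by (auto simp: hs_def)
qed

lemma rev_core:
  assumes "length qs = length ps" "k \<le> length ps"
    "hs qs ed' k = (b \<noteq> hs ps ed (length ps - k))"
  shows "word ((\<sigma> \<noteq> odd (length ps)) \<noteq> b) qs ed' ! k = rev (word \<sigma> ps ed) ! k"
proof -
  have "rev (word \<sigma> ps ed) ! k = word \<sigma> ps ed ! (length ps - k)"
    using assms by (simp add: rev_nth length_word)
  also have "\<dots> = ((\<sigma> \<noteq> odd (length ps - k)) = hs ps ed (length ps - k))"
    by (simp add: word_nth del: upt_Suc)
  finally have R: "rev (word \<sigma> ps ed) ! k = ((\<sigma> \<noteq> odd (length ps - k)) = hs ps ed (length ps - k))" .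
  have W: "word ((\<sigma> \<noteq> odd (length ps)) \<noteq> b) qs ed' ! k = ((((\<sigma> \<noteq> odd (length ps)) \<noteq> b) \<noteq> odd k) = hs qs ed' k)"
    by (rule word_nth) (use assms in simp)
  show ?thesis unfolding R W assms(3) odd_diff[OF assms(2)] by auto
qed

lemma rev_full:
  assumes "length qs = length ps"
    "\<forall>k. 0 < k \<and> k \<le> length ps \<longrightarrow> hs qs ed' k = (b \<noteq> hs ps ed (length ps - k))"
    "hs ps ed (length ps) = (\<not> b)"
  shows "word ((\<sigma> \<noteq> odd (length ps)) \<noteq> b) qs ed' = rev (word \<sigma> ps ed)"
proof (rule nth_equalityI)
  show "length (word ((\<sigma> \<noteq> odd (length ps)) \<noteq> b) qs ed') = length (rev (word \<sigma> ps ed))"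
    using assms by (simp add: length_word)
  fix k assume "k < length (word ((\<sigma> \<noteq> odd (length ps)) \<noteq> b) qs ed')"
  then have k: "k \<le> length ps" using assms by (simp add: length_word)
  show "word ((\<sigma> \<noteq> odd (length ps)) \<noteq> b) qs ed' ! k = rev (word \<sigma> ps ed) ! k"
  proof (rule rev_core[OF assms(1) k])
    show "hs qs ed' k = (b \<noteq> hs ps ed (length ps - k))"
      using assms(2,3) k hs0[of qs ed'] by (cases "k = 0") auto
  qed
qed

lemma rev_flip:
  assumes "length qs = length ps"
    "\<forall>k. 0 < k \<and> k \<le> length ps \<longrightarrow> hs qs ed' k = (b \<noteq> hs ps ed (length ps - k))"
    "hs ps ed (length ps) = b"
  shows "word ((\<sigma> \<noteq> odd (length ps)) \<noteq> b) qs ed' = (\<not> hd (rev (word \<sigma> ps ed))) # tl (rev (word \<sigma> ps ed))"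
proof (rule list_flip)
  show "length (word ((\<sigma> \<noteq> odd (length ps)) \<noteq> b) qs ed') = length (rev (word \<sigma> ps ed))"
    using assms by (simp add: length_word)
  show "rev (word \<sigma> ps ed) \<noteq> []" using length_word[of \<sigma> ps ed] by (metis Zero_not_Suc length_0_conv length_rev)
  show "word ((\<sigma> \<noteq> odd (length ps)) \<noteq> b) qs ed' ! 0 = (\<not> rev (word \<sigma> ps ed) ! 0)"
    using assms by (simp add: rev_nth length_word word_nth hs0 del: upt_Suc)
  show "\<forall>k. 0 < k \<and> k < length (rev (word \<sigma> ps ed)) \<longrightarrow>
      word ((\<sigma> \<noteq> odd (length ps)) \<noteq> b) qs ed' ! k = rev (word \<sigma> ps ed) ! k"
  proof (intro allI impI)
    fix k assume k: "0 < k \<and> k < length (rev (word \<sigma> ps ed))"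
    then have "k \<le> length ps" by (simp add: length_word)
    then show "word ((\<sigma> \<noteq> odd (length ps)) \<noteq> b) qs ed' ! k = rev (word \<sigma> ps ed) ! k"
      using rev_core[OF assms(1)] assms(2) k by blast
  qed
qed

theorem proposition3p1:
  fixes a :: "nat list" and ps :: "pt list" and ed :: edge
  assumes pos: "\<forall>x \<in> set a. x > 0"
    and d: "sum_list a - 1 \<ge> 1"
    and G: "presents a ps ed"
  shows
    "(\<exists>qs ed'. presents (1 # (hd a - 1) # tl a) qs ed' \<and>
        snake_edges qs = map_edges refl_diag (snake_edges ps))
   \<and> (ed = north_edge (last ps) \<longrightarrow>
        (\<exists>qs ed'. presents (1 # (last a - 1) # tl (rev a)) qs ed' \<and>
           snake_edges qs = map_edges refl_antidiag (snake_edges ps)))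
   \<and> (ed = east_edge (last ps) \<longrightarrow>
        (\<exists>qs ed'. presents (rev a) qs ed' \<and>
           snake_edges qs = map_edges refl_antidiag (snake_edges ps)))
   \<and> (ed = north_edge (last ps) \<longrightarrow>
        (\<exists>qs ed'. presents (rev a) qs ed' \<and>
           snake_edges qs = map_edges rot180 (snake_edges ps)))
   \<and> (ed = east_edge (last ps) \<longrightarrow>
        (\<exists>qs ed'. presents (1 # (last a - 1) # tl (rev a)) qs ed' \<and>
           snake_edges qs = map_edges rot180 (snake_edges ps)))"
proof -
  from G obtain \<sigma> s where sn: "snake_tiles ps" and len: "length ps = sum_list a - 1"
    and edin: "ed \<in> {north_edge (last ps), east_edge (last ps)}"
    and w: "word \<sigma> ps ed = sign_pattern s a"
    unfolding presents_iff by blast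
  have ne: "a \<noteq> []" using d by auto
  then obtain x xs where a: "a = x # xs" by (cases a) auto
  have x: "x > 0" using pos a by simp
  have la: "last a > 0" using pos ne by simp
  have ra: "rev a = last a # tl (rev a)" using ne by (cases "rev a") (auto simp flip: last_rev)
  have psne: "ps \<noteq> []" using sn by (simp add: snake_tiles_def)
  define L where "L = length ps"
  have hsN: "ed = north_edge (last ps) \<Longrightarrow> hs ps ed L" by (simp add: hs_def L_def)
  have hsE: "ed = east_edge (last ps) \<Longrightarrow> \<not> hs ps ed L"
    using north_ne_east[of "last ps"] psne by (auto simp: hs_def L_def)
  obtain t where rw: "rev (word \<sigma> ps ed) = sign_pattern t (rev a)"
    using w sp_rev by metis
  have sumrev: "sum_list (rev a) = sum_list a" by simp
  have PA: "\<exists>qs ed'. presents (1 # (hd a - 1) # tl a) qs ed' \<and>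
        snake_edges qs = map_edges refl_diag (snake_edges ps)"
  proof (intro exI conjI)
    let ?qs = "map refl_diag ps"
    let ?ed = "if ed = north_edge (last ps) then east_edge (last ?qs) else north_edge (last ?qs)"
    show "snake_edges ?qs = map_edges refl_diag (snake_edges ps)" by (rule edges_diag)
    have "word (\<not> \<sigma>) ?qs ?ed = (\<not> hd (word \<sigma> ps ed)) # tl (word \<sigma> ps ed)"
    proof (rule list_flip)
      show "length (word (\<not> \<sigma>) ?qs ?ed) = length (word \<sigma> ps ed)" by (simp add: length_word)
      show "word \<sigma> ps ed \<noteq> []" using length_word[of \<sigma> ps ed] by (metis Zero_not_Suc length_0_conv)
      show "word (\<not> \<sigma>) ?qs ?ed ! 0 = (\<not> word \<sigma> ps ed ! 0)"
        by (simp add: word_nth hs0 del: upt_Suc)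
      show "\<forall>k. 0 < k \<and> k < length (word \<sigma> ps ed) \<longrightarrow> word (\<not> \<sigma>) ?qs ?ed ! k = word \<sigma> ps ed ! k"
        using hs_diag[OF sn] by (auto simp: word_nth length_word simp del: upt_Suc)
    qed
    then have "word (\<not> \<sigma>) ?qs ?ed = sign_pattern (\<not> s) (1 # (hd a - 1) # tl a)"
      using w sp_flip[OF x] a by simp
    moreover have "?ed \<in> {north_edge (last ?qs), east_edge (last ?qs)}" by simp
    moreover have "length ?qs = sum_list (1 # (hd a - 1) # tl a) - 1" using len a x by simp
    ultimately show "presents (1 # (hd a - 1) # tl a) ?qs ?ed"
      unfolding presents_iff using snake_diag[OF sn] by blast
  qed
  let ?qr = "rev (map tr ps)"
  let ?qa = "rev (map ta ps)"
  have hr: "\<forall>k. 0 < k \<and> k \<le> length ps \<longrightarrow> hs ?qr (north_edge (last ?qr)) k = (False \<noteq> hs ps ed (length ps - k))"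
    using hs_tr[OF sn] by simp
  have ha: "\<forall>k. 0 < k \<and> k \<le> length ps \<longrightarrow> hs ?qa (east_edge (last ?qa)) k = (True \<noteq> hs ps ed (length ps - k))"
    using hs_ta[OF sn] by simp
  have lr: "length ?qr = length ps" "length ?qa = length ps" by simp_all
  have inr: "north_edge (last ?qr) \<in> {north_edge (last ?qr), east_edge (last ?qr)}" by simp
  have ina: "east_edge (last ?qa) \<in> {north_edge (last ?qa), east_edge (last ?qa)}" by simp
  have flipr: "(\<not> hd (rev (word \<sigma> ps ed))) # tl (rev (word \<sigma> ps ed)) = sign_pattern (\<not> t) (1 # (last a - 1) # tl (rev a))"
    using rw sp_flip[OF la, of t "tl (rev a)"] ra by metis
  have pres: "presents b qs ed'" if "snake_tiles qs" "length qs = length ps" "sum_list b = sum_list a"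
     "ed' \<in> {north_edge (last qs), east_edge (last qs)}" "word \<sigma>' qs ed' = sign_pattern s' b" for b qs ed' \<sigma>' s'
    unfolding presents_iff using that len by metis
  have s1: "sum_list (1 # (last a - 1) # tl (rev a)) = sum_list a"
  proof -
    have "sum_list (1 # (last a - 1) # tl (rev a)) = sum_list (rev a)" using la by (subst (2) ra) simp
    then show ?thesis by simp
  qed
  show ?thesis
  proof (intro conjI impI)
    show "\<exists>qs ed'. presents (1 # (hd a - 1) # tl a) qs ed' \<and>
        snake_edges qs = map_edges refl_diag (snake_edges ps)" by (rule PA)
  next
    assume N: "ed = north_edge (last ps)"
    have "word ((\<sigma> \<noteq> odd (length ps)) \<noteq> True) ?qa (east_edge (last ?qa)) = (\<not> hd (rev (word \<sigma> ps ed))) # tl (rev (word \<sigma> ps ed))"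
      by (rule rev_flip[OF lr(2) ha]) (use hsN[OF N] in \<open>simp add: L_def\<close>)
    then have "presents (1 # (last a - 1) # tl (rev a)) ?qa (east_edge (last ?qa))"
      using pres[OF snake_ta[OF sn] lr(2) s1 ina] flipr by metis
    then show "\<exists>qs ed'. presents (1 # (last a - 1) # tl (rev a)) qs ed' \<and>
           snake_edges qs = map_edges refl_antidiag (snake_edges ps)"
      using edges_ta by blast
  next
    assume E: "ed = east_edge (last ps)"
    have "word ((\<sigma> \<noteq> odd (length ps)) \<noteq> True) ?qa (east_edge (last ?qa)) = rev (word \<sigma> ps ed)"
      by (rule rev_full[OF lr(2) ha]) (use hsE[OF E] in \<open>simp add: L_def\<close>)
    then have "presents (rev a) ?qa (east_edge (last ?qa))"
      using pres[OF snake_ta[OF sn] lr(2) sumrev ina] rw by metis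
    then show "\<exists>qs ed'. presents (rev a) qs ed' \<and>
           snake_edges qs = map_edges refl_antidiag (snake_edges ps)"
      using edges_ta by blast
  next
    assume N: "ed = north_edge (last ps)"
    have "word ((\<sigma> \<noteq> odd (length ps)) \<noteq> False) ?qr (north_edge (last ?qr)) = rev (word \<sigma> ps ed)"
      by (rule rev_full[OF lr(1) hr]) (use hsN[OF N] in \<open>simp add: L_def\<close>)
    then have "presents (rev a) ?qr (north_edge (last ?qr))"
      using pres[OF snake_tr[OF sn] lr(1) sumrev inr] rw by metis
    then show "\<exists>qs ed'. presents (rev a) qs ed' \<and>
           snake_edges qs = map_edges rot180 (snake_edges ps)"
      using edges_tr by blast
  next
    assume E: "ed = east_edge (last ps)"
    have "word ((\<sigma> \<noteq> odd (length ps)) \<noteq> False) ?qr (north_edge (last ?qr)) = (\<not> hd (rev (word \<sigma> ps ed))) # tl (rev (word \<sigma> ps ed))"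
      by (rule rev_flip[OF lr(1) hr]) (use hsE[OF E] in \<open>simp add: L_def\<close>)
    then have "presents (1 # (last a - 1) # tl (rev a)) ?qr (north_edge (last ?qr))"
      using pres[OF snake_tr[OF sn] lr(1) s1 inr] flipr by metis
    then show "\<exists>qs ed'. presents (1 # (last a - 1) # tl (rev a)) qs ed' \<and>
           snake_edges qs = map_edges rot180 (snake_edges ps)"
      using edges_tr by blast
  qed
qed

end
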